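(* For all integers $p\ge 1$, $$E\,|C(p;\mathbf U_1)-C(p-1;\mathbf U_1)|\le 2.$$
   Context: Let $U_1,U_2,\ldots$ be i.i.d. uniform random variables on $[0,1]$ and $\mathbf U_k=(U_k,U_{k+1},\ldots)$ for $k\ge1$. Define $C(n;\mathbf U_k)$ for integers $n\ge0$ and $k\ge1$ recursively by $C(0;\mathbf U_k)=0$ and $C(n;\mathbf U_k)=n-1+C(\lfloor nU_k\rfloor;\mathbf U_{k+1})$ for $n\ge1$. (This is the number of comparisons made by Quickselect to find the minimum of $n$ distinct numbers.) *)

theory Defs
  imports "HOL-Probability.Probability"
begin

text \<open>Sample space: sequences u :: nat => real, u i playing the role of U_(i+1),
  with i.i.d. uniform [0,1] coordinates (infinite product measure).\<close>

definition U_space :: "(nat \<Rightarrow> real) measure" where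
  "U_space = PiM UNIV (\<lambda>_. uniform_measure lborel {0..1::real})"

text \<open>The recursive argument is
  nat (floor (n * u 0)), which is < n whenever u 0 is in [0,1); the guard
  min (n-1) only affects the null event u 0 >= 1 (where the paper's recursion
  is not well founded anyway).\<close>

fun C :: "nat \<Rightarrow> (nat \<Rightarrow> real) \<Rightarrow> nat" where
  "C 0 u = 0"
| "C (Suc m) u = m + C (min m (nat \<lfloor>real (Suc m) * u 0\<rfloor>)) (\<lambda>k. u (Suc k))"

end

theory Submission
  imports Defs
begin

lemma Cstep: "C (Suc m) (case_nat s w) = m + C (min m (nat \<lfloor>real (Suc m) * s\<rfloor>)) w"
  by (simp del: of_nat_Suc)

lemma floor_facts:
  fixes s :: real and m :: nat
  assumes "0 \<le> s" "s \<le> 1" "m \<ge> 1"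
  defines "A \<equiv> nat \<lfloor>real (Suc m) * s\<rfloor>" and "B \<equiv> nat \<lfloor>real m * s\<rfloor>"
  shows "B \<le> A" "A \<le> B + 1" "B \<le> m" "B = m \<Longrightarrow> A = Suc m"
    "real A \<le> real (Suc m) * s" "real m * s < real B + 1"
proof -
  have x0: "0 \<le> real m * s" using assms by simp
  have fl: "\<lfloor>real m * s\<rfloor> \<le> \<lfloor>real (Suc m) * s\<rfloor>"
    by (rule floor_mono) (use assms in \<open>simp add: algebra_simps\<close>)
  have fl2: "\<lfloor>real (Suc m) * s\<rfloor> \<le> \<lfloor>real m * s\<rfloor> + 1"
  proof -
    have "real (Suc m) * s \<le> real m * s + 1" using assms by (simp add: algebra_simps)
    then have "\<lfloor>real (Suc m) * s\<rfloor> \<le> \<lfloor>real m * s + 1\<rfloor>" by (rule floor_mono)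
    then show ?thesis by simp
  qed
  have fl0: "0 \<le> \<lfloor>real m * s\<rfloor>" using x0 by simp
  show "B \<le> A" using fl fl0 unfolding A_def B_def by linarith
  show "A \<le> B + 1" using fl2 fl0 fl unfolding A_def B_def by linarith
  have "real m * s \<le> real m" using assms by (simp add: mult_left_le)
  then have "\<lfloor>real m * s\<rfloor> \<le> int m" by (simp add: floor_le_iff)
  then show "B \<le> m" unfolding B_def by linarith
  show "A = Suc m" if "B = m"
  proof -
    have "int m \<le> \<lfloor>real m * s\<rfloor>" using that fl0 unfolding B_def by linarith
    then have "real m \<le> real m * s" by (simp add: le_floor_iff)
    moreover have "real m > 0" using assms by simp
    ultimately have "real m * 1 \<le> real m * s" by simp
    then have "1 \<le> s" using \<open>real m > 0\<close> mult_le_cancel_left_pos by blast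
    then have "s = 1" using assms by simp
    then show ?thesis unfolding A_def by simp
  qed
  show "real A \<le> real (Suc m) * s" unfolding A_def using assms
    by (simp del: of_nat_Suc)
  have "real B = real_of_int \<lfloor>real m * s\<rfloor>" unfolding B_def using fl0 by simp
  then show "real m * s < real B + 1" using real_of_int_floor_add_one_gt[of "real m * s"] by linarith
qed

definition K :: "nat \<Rightarrow> real set" where
  "K m = (\<Union>j\<in>{1..m}. {real j / real (Suc m) .. real j / real m})"

definition aa :: "nat \<Rightarrow> real \<Rightarrow> nat" where
  "aa m s = min m (nat \<lfloor>real (Suc m) * s\<rfloor>)"

lemma pw:
  fixes s :: real
  assumes s: "0 \<le> s" "s \<le> 1"
  shows "\<bar>real (C (Suc m) (case_nat s w)) - real (C m (case_nat s w))\<bar>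
     \<le> 1 + indicator (K m) s * \<bar>real (C (aa m s) w) - real (C (aa m s - 1) w)\<bar>"
proof (cases m)
  case 0
  then show ?thesis by (simp add: indicator_def)
next
  case (Suc k)
  define A where "A = nat \<lfloor>real (Suc m) * s\<rfloor>"
  define B where "B = nat \<lfloor>real m * s\<rfloor>"
  have m1: "m \<ge> 1" using Suc by simp
  note ff = floor_facts[OF s m1, folded A_def B_def]
  have e1: "C (Suc m) (case_nat s w) = m + C (min m A) w" unfolding A_def by (rule Cstep)
  have e2: "C m (case_nat s w) = k + C (min k B) w" unfolding B_def Suc by (rule Cstep)
  have aa: "aa m s = min m A" unfolding aa_def A_def ..
  have nn: "0 \<le> indicator (K m) s * \<bar>real (C (aa m s) w) - real (C (aa m s - 1) w)\<bar>"
    by simp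
  show ?thesis
  proof (cases "A = B")
    case True
    then have "B \<noteq> m" using ff(4) by auto
    then have "min m A = min k B" using True ff(3) Suc by simp
    then have r1: "real (C (Suc m) (case_nat s w)) = real m + real (C (min k B) w)" using e1 by simp
    have r2: "real (C m (case_nat s w)) = real k + real (C (min k B) w)" using e2 by simp
    have r3: "real m = real k + 1" using Suc by simp
    show ?thesis using r1 r2 r3 nn by linarith
  next
    case False
    then have AB: "A = B + 1" using ff(1,2) by simp
    have mk: "min m A = min k B + 1" using AB Suc by simp
    have inK: "s \<in> K m"
    proof -
      define j where "j = min m A"
      have j1: "1 \<le> j" "j \<le> m" unfolding j_def using AB m1 by auto
      have "real j \<le> real (Suc m) * s" using ff(5) unfolding j_def by simp
      then have l: "real j / real (Suc m) \<le> s"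
        by (simp add: divide_le_eq mult.commute del: of_nat_Suc)
      have "real m * s \<le> real j"
      proof (cases "A \<le> m")
        case True
        then show ?thesis using ff(6) AB unfolding j_def by simp
      next
        case False
        then have "j = m" unfolding j_def by simp
        then show ?thesis using s m1 by (simp add: mult_left_le)
      qed
      then have r: "s \<le> real j / real m" using m1 by (simp add: le_divide_eq mult.commute)
      show ?thesis unfolding K_def using j1 l r by auto
    qed
    have "real (C (Suc m) (case_nat s w)) - real (C m (case_nat s w))
        = 1 + (real (C (aa m s) w) - real (C (aa m s - 1) w))"
    proof -
      have r1: "real (C (Suc m) (case_nat s w)) = real m + real (C (aa m s) w)" using e1 aa by simp
      have r2: "real (C m (case_nat s w)) = real k + real (C (aa m s - 1) w)" using e2 aa mk by simp
      have r3: "real m = real k + 1" using Suc by simp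
      show ?thesis using r1 r2 r3 by linarith
    qed
    then show ?thesis using inK by simp
  qed
qed

lemma (in prob_space) nn_integral_PiM_iter:
  assumes f[measurable]: "f \<in> borel_measurable (PiM UNIV (\<lambda>_::nat. M))"
  shows "(\<integral>\<^sup>+X. f X \<partial>PiM UNIV (\<lambda>_::nat. M)) = (\<integral>\<^sup>+x. (\<integral>\<^sup>+X. f (case_nat x X) \<partial>PiM UNIV (\<lambda>_::nat. M)) \<partial>M)"
proof -
  interpret S: sequence_space M ..
  interpret P: pair_sigma_finite M "\<Pi>\<^sub>M i::nat\<in>UNIV. M" ..
  have "(\<integral>\<^sup>+X. f X \<partial>S.S) = (\<integral>\<^sup>+X. f ((\<lambda>(s, \<omega>). case_nat s \<omega>) X) \<partial>(M \<Otimes>\<^sub>M S.S))"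
    by (subst S.PiM_iter[symmetric]) (simp add: nn_integral_distr)
  also have "\<dots> = (\<integral>\<^sup>+x. \<integral>\<^sup>+X. f ((\<lambda>(s, \<omega>). case_nat s \<omega>) (x, X)) \<partial>S.S \<partial>M)"
    by (subst S.nn_integral_fst) simp_all
  finally show ?thesis by simp
qed

abbreviation UM :: "real measure" where "UM \<equiv> uniform_measure lborel {0..1::real}"

lemma C_meas: "(\<lambda>u. C n u) \<in> measurable (PiM UNIV (\<lambda>_::nat. UM)) (count_space UNIV)"
proof (induction n rule: less_induct)
  case (less n)
  show ?case
  proof (cases n)
    case 0 then show ?thesis by simp
  next
    case (Suc m)
    have sh: "(\<lambda>u. (\<lambda>k. u (Suc k))) \<in> measurable (PiM UNIV (\<lambda>_::nat. UM)) (PiM UNIV (\<lambda>_::nat. UM))"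
      by (rule measurable_PiM_single'[where f="\<lambda>k u. u (Suc k)"]) (auto simp: space_PiM)
    have g: "(\<lambda>u. nat \<lfloor>real (Suc m) * u 0\<rfloor>) \<in> measurable (PiM UNIV (\<lambda>_::nat. UM)) (count_space UNIV)"
      by measurable
    have f: "(\<lambda>u. C (min m i) (\<lambda>k. u (Suc k))) \<in> measurable (PiM UNIV (\<lambda>_::nat. UM)) (count_space UNIV)" for i
      using measurable_compose[OF sh less[of "min m i"]] Suc by simp
    have "(\<lambda>u. C (min m (nat \<lfloor>real (Suc m) * u 0\<rfloor>)) (\<lambda>k. u (Suc k))) \<in> measurable (PiM UNIV (\<lambda>_::nat. UM)) (count_space UNIV)"
      by (rule measurable_compose_countable[where f="\<lambda>i u. C (min m i) (\<lambda>k. u (Suc k))", OF f g])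
    then show ?thesis using Suc by simp
  qed
qed

lemma C_real_meas[measurable]: "(\<lambda>u. real (C n u)) \<in> borel_measurable (PiM UNIV (\<lambda>_::nat. UM))"
  by (rule measurable_compose[OF C_meas]) auto

lemma K_sets: "K m \<in> sets borel"
  unfolding K_def by measurable

lemma sum_half: "(\<Sum>j\<in>{1..m}. real j / real m - real j / real (Suc m)) \<le> 1/2"
proof (cases "m = 0")
  case True then show ?thesis by simp
next
  case False
  have "(\<Sum>j\<in>{1..m}. real j / real m - real j / real (Suc m)) = (\<Sum>j\<in>{1..m}. real j) / (real m * real (Suc m))"
  proof -
    have "real j / real m - real j / real (Suc m) = real j / (real m * real (Suc m))" for j
      using False by (simp add: field_simps del: of_nat_Suc) (simp add: algebra_simps)
    then show ?thesis by (simp add: sum_divide_distrib del: of_nat_Suc)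
  qed
  also have "(\<Sum>j\<in>{1..m}. real j) = real m * (real m + 1) / 2"
    by (induction m) (simp_all add: field_simps)
  also have "real m * (real m + 1) / 2 / (real m * real (Suc m)) = 1/2"
  proof -
    have "real m > 0" using False by simp
    then have "real m * (real m + 1) \<noteq> 0" by simp
    then show ?thesis by (simp add: field_simps)
  qed
  finally show ?thesis by simp
qed

lemma K_meas: "emeasure UM (K m) \<le> ennreal (1/2)"
proof -
  have "emeasure UM (K m) \<le> (\<Sum>j\<in>{1..m}. emeasure UM {real j / real (Suc m) .. real j / real m})"
    unfolding K_def by (rule emeasure_subadditive_finite) auto
  also have "\<dots> = (\<Sum>j\<in>{1..m}. ennreal (real j / real m - real j / real (Suc m)))"
  proof (rule sum.cong[OF refl])
    fix j assume j: "j \<in> {1..m}"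
    have a0: "0 \<le> real j / real (Suc m)" by simp
    have ab: "real j / real (Suc m) \<le> real j / real m"
      using j by (intro divide_left_mono) auto
    have b1: "real j / real m \<le> 1" using j by simp
    have "{real j / real (Suc m) .. real j / real m} \<inter> {0..1} = {real j / real (Suc m) .. real j / real m}"
      using a0 b1 by auto
    then show "emeasure UM {real j / real (Suc m) .. real j / real m} = ennreal (real j / real m - real j / real (Suc m))"
      using ab by (simp add: divide_ennreal_def)
  qed
  also have "\<dots> = ennreal (\<Sum>j\<in>{1..m}. real j / real m - real j / real (Suc m))"
    by (rule sum_ennreal) (auto intro!: divide_left_mono)
  also have "\<dots> \<le> ennreal (1/2)" by (rule ennreal_leI) (rule sum_half)
  finally show ?thesis .
qed

definition DD :: "nat \<Rightarrow> (nat \<Rightarrow> real) \<Rightarrow> ennreal" where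
  "DD n u = ennreal \<bar>real (C n u) - real (C (n-1) u)\<bar>"

lemma DD_meas[measurable]: "DD n \<in> borel_measurable (PiM UNIV (\<lambda>_::nat. UM))"
  unfolding DD_def by measurable

lemma UM_prob: "prob_space UM"
  by (rule prob_space_uniform_measure) auto

lemma pw_enn:
  fixes s :: real
  assumes "0 \<le> s" "s \<le> 1"
  shows "DD (Suc m) (case_nat s w) \<le> 1 + ennreal (indicator (K m) s) * DD (aa m s) w"
proof -
  have "DD (Suc m) (case_nat s w) \<le> ennreal (1 + indicator (K m) s * \<bar>real (C (aa m s) w) - real (C (aa m s - 1) w)\<bar>)"
    unfolding DD_def diff_Suc_1 by (rule ennreal_leI[OF pw[OF assms]])
  also have "\<dots> = 1 + ennreal (indicator (K m) s) * DD (aa m s) w"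
    unfolding DD_def by (simp add: ennreal_plus ennreal_mult)
  finally show ?thesis .
qed

lemma F_bound: "(\<integral>\<^sup>+u. DD n u \<partial>PiM UNIV (\<lambda>_::nat. UM)) \<le> 2"
proof (induction n rule: less_induct)
  case (less n)
  show ?case
  proof (cases n)
    case 0 then show ?thesis by (simp add: DD_def)
  next
    case (Suc m)
    let ?S = "PiM UNIV (\<lambda>_::nat. UM)"
    interpret S: prob_space ?S by (intro prob_space_PiM UM_prob)
    have "(\<integral>\<^sup>+u. DD n u \<partial>?S) = (\<integral>\<^sup>+s. (\<integral>\<^sup>+w. DD n (case_nat s w) \<partial>?S) \<partial>UM)"
      using prob_space.nn_integral_PiM_iter[OF UM_prob DD_meas] .
    also have "\<dots> \<le> (\<integral>\<^sup>+s. (\<integral>\<^sup>+w. (1 + ennreal (indicator (K m) s) * DD (aa m s) w) \<partial>?S) \<partial>UM)"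
    proof (rule nn_integral_mono_AE)
      have "AE s in UM. s \<in> {0..1}" by (rule AE_uniform_measureI) auto
      then show "AE s in UM. (\<integral>\<^sup>+w. DD n (case_nat s w) \<partial>?S) \<le> (\<integral>\<^sup>+w. (1 + ennreal (indicator (K m) s) * DD (aa m s) w) \<partial>?S)"
      proof eventually_elim
        case (elim s)
        then show ?case using pw_enn[of s m] Suc by (intro nn_integral_mono) auto
      qed
    qed
    also have "\<dots> = (\<integral>\<^sup>+s. (1 + ennreal (indicator (K m) s) * (\<integral>\<^sup>+w. DD (aa m s) w \<partial>?S)) \<partial>UM)"
    proof (rule nn_integral_cong)
      fix s
      have "(\<integral>\<^sup>+w. (1 + ennreal (indicator (K m) s) * DD (aa m s) w) \<partial>?S)
          = (\<integral>\<^sup>+w. 1 \<partial>?S) + (\<integral>\<^sup>+w. ennreal (indicator (K m) s) * DD (aa m s) w \<partial>?S)"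
        by (rule nn_integral_add) auto
      also have "\<dots> = 1 + ennreal (indicator (K m) s) * (\<integral>\<^sup>+w. DD (aa m s) w \<partial>?S)"
        by (simp add: nn_integral_cmult S.emeasure_space_1)
      finally show "(\<integral>\<^sup>+w. (1 + ennreal (indicator (K m) s) * DD (aa m s) w) \<partial>?S)
          = 1 + ennreal (indicator (K m) s) * (\<integral>\<^sup>+w. DD (aa m s) w \<partial>?S)" .
    qed
    also have "\<dots> \<le> (\<integral>\<^sup>+s. (1 + ennreal (indicator (K m) s) * 2) \<partial>UM)"
    proof (rule nn_integral_mono)
      fix s
      have "aa m s < n" unfolding aa_def Suc by simp
      then have "(\<integral>\<^sup>+w. DD (aa m s) w \<partial>?S) \<le> 2" by (rule less)
      then show "1 + ennreal (indicator (K m) s) * (\<integral>\<^sup>+w. DD (aa m s) w \<partial>?S) \<le> 1 + ennreal (indicator (K m) s) * 2"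
        by (intro add_left_mono mult_left_mono) auto
    qed
    also have "\<dots> = (\<integral>\<^sup>+s. 1 \<partial>UM) + (\<integral>\<^sup>+s. 2 * indicator (K m) s \<partial>UM)"
    proof -
      have [measurable]: "K m \<in> sets UM" by (simp add: K_sets)
      have "(\<integral>\<^sup>+s. (1 + ennreal (indicator (K m) s) * 2) \<partial>UM) = (\<integral>\<^sup>+s. (1 + 2 * indicator (K m) s) \<partial>UM)"
        by (rule nn_integral_cong) (auto simp: indicator_def)
      also have "\<dots> = (\<integral>\<^sup>+s. 1 \<partial>UM) + (\<integral>\<^sup>+s. 2 * indicator (K m) s \<partial>UM)"
        by (rule nn_integral_add) auto
      finally show ?thesis .
    qed
    also have "\<dots> = 1 + 2 * emeasure UM (K m)"
      using K_sets prob_space.emeasure_space_1[OF UM_prob] by (simp add: nn_integral_cmult_indicator)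
    also have "\<dots> \<le> 1 + 2 * ennreal (1/2)"
      using K_meas by (intro add_left_mono mult_left_mono) auto
    also have "\<dots> = 2"
      using ennreal_mult[of 2 "1/2", symmetric] by simp
    finally show ?thesis .
  qed
qed

theorem lemma2p4:
  fixes p :: nat
  assumes "p \<ge> 1"
  shows "(\<integral>u. \<bar>real (C p u) - real (C (p - 1) u)\<bar> \<partial>U_space) \<le> 2"
proof -
  let ?f = "\<lambda>u. \<bar>real (C p u) - real (C (p - 1) u)\<bar>"
  have F: "(\<integral>\<^sup>+u. ennreal (?f u) \<partial>U_space) \<le> 2"
    using F_bound[of p] unfolding U_space_def DD_def .
  have meas: "?f \<in> borel_measurable U_space" unfolding U_space_def by measurable
  have int: "integrable U_space ?f"
    by (rule integrableI_nonneg[OF meas]) (use F in \<open>auto simp: le_less_trans\<close>)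
  have "ennreal (integral\<^sup>L U_space ?f) = (\<integral>\<^sup>+u. ennreal (?f u) \<partial>U_space)"
    by (rule nn_integral_eq_integral[OF int, symmetric]) auto
  then have "ennreal (integral\<^sup>L U_space ?f) \<le> ennreal 2" using F by simp
  then show ?thesis by (rule ennreal_le_iff[THEN iffD1, rotated]) simp
qed

end
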